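(* Every expanding automaton semigroup is residually finite.
   Context: An expanding automaton is a quadruple $\mathcal{A}=(Q,\Sigma,t,o)$ with $Q$ a finite set of states, $\Sigma$ a finite alphabet, $t:Q\times\Sigma\to Q$ and $o:Q\times\Sigma\to\Sigma^+$. Each state $q$ induces $q:\Sigma^*\to\Sigma^*$ by $q(\emptyset)=\emptyset$ and $q(\sigma w)=o(q,\sigma)\,q'(w)$ with $q'=t(q,\sigma)$. An expanding automaton semigroup is (a semigroup isomorphic to) the semigroup of maps $\Sigma^*\to\Sigma^*$ generated under composition by the states of an expanding automaton. *)

theory Defs
  imports Main
begin

fun state_map :: "('q \<Rightarrow> 'a \<Rightarrow> 'q) \<Rightarrow> ('q \<Rightarrow> 'a \<Rightarrow> 'a list) \<Rightarrow> 'q \<Rightarrow> 'a list \<Rightarrow> 'a list" where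
  "state_map tr out q [] = []"
| "state_map tr out q (\<sigma> # w) = out q \<sigma> @ state_map tr out (tr q \<sigma>) w"

inductive_set gen_semigroup :: "('b \<Rightarrow> 'b) set \<Rightarrow> ('b \<Rightarrow> 'b) set" for G where
  gen: "f \<in> G \<Longrightarrow> f \<in> gen_semigroup G"
| comp: "f \<in> gen_semigroup G \<Longrightarrow> g \<in> gen_semigroup G \<Longrightarrow> f \<circ> g \<in> gen_semigroup G"

definition automaton_semigroup :: "('q \<Rightarrow> 'a \<Rightarrow> 'q) \<Rightarrow> ('q \<Rightarrow> 'a \<Rightarrow> 'a list) \<Rightarrow> ('a list \<Rightarrow> 'a list) set" where
  "automaton_semigroup tr out = gen_semigroup (range (state_map tr out))"

text \<open>A semigroup (S, mult) is residually finite if any two distinct elements are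
  separated by a congruence of finite index (equivalently, by a homomorphism
  onto a finite semigroup).\<close>
definition residually_finite :: "'b set \<Rightarrow> ('b \<Rightarrow> 'b \<Rightarrow> 'b) \<Rightarrow> bool" where
  "residually_finite S mult \<longleftrightarrow>
     (\<forall>x\<in>S. \<forall>y\<in>S. x \<noteq> y \<longrightarrow>
        (\<exists>R. equiv S R
             \<and> (\<forall>a b c. (a, b) \<in> R \<and> c \<in> S \<longrightarrow>
                   (mult a c, mult b c) \<in> R \<and> (mult c a, mult c b) \<in> R)
             \<and> finite (S // R)
             \<and> (x, y) \<notin> R))"

end

theory Submission
  imports Defs "HOL-Library.FuncSet"
begin

lemma sm_append: "\<exists>ts. state_map tr out q (u @ v) = state_map tr out q u @ ts"
  by (induction u arbitrary: q) auto

lemma sm_length: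
  assumes "\<And>q \<sigma>. out q \<sigma> \<noteq> []"
  shows "length u \<le> length (state_map tr out q u)"
proof (induction u arbitrary: q)
  case (Cons a u)
  have "out q a \<noteq> []" using assms by blast
  then show ?case using Cons[of "tr q a"] by (cases "out q a") auto
qed simp

definition PP :: "('a list \<Rightarrow> 'a list) \<Rightarrow> bool" where
  "PP h \<longleftrightarrow> (\<forall>n u. take n (h u) = take n (h (take n u)))"

lemma take_prefix_eq:
  assumes "n \<le> length x" shows "take n (x @ ts) = take n x"
  using assms by simp

lemma PP_state:
  assumes "\<And>q \<sigma>. out q \<sigma> \<noteq> []"
  shows "PP (state_map tr out q)"
  unfolding PP_def
proof (intro allI)
  fix n and u :: "'b list"
  show "take n (state_map tr out q u) = take n (state_map tr out q (take n u))"
  proof (cases "length u \<le> n")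
    case True then show ?thesis by simp
  next
    case False
    obtain ts where ts: "state_map tr out q (take n u @ drop n u) = state_map tr out q (take n u) @ ts"
      using sm_append[of tr out q "take n u" "drop n u"] by blast
    have "n \<le> length (state_map tr out q (take n u))"
      using sm_length[where out=out and tr=tr and q=q and u="take n u", OF assms] False by simp
    then show ?thesis using ts by simp
  qed
qed

lemma PP_comp: assumes f: "PP f" and g: "PP g" shows "PP (f \<circ> g)"
  unfolding PP_def
proof (intro allI)
  fix n u
  have "take n (f (g u)) = take n (f (take n (g u)))" using f unfolding PP_def by blast
  also have "take n (g u) = take n (g (take n u))" using g unfolding PP_def by blast
  also have "take n (f (take n (g (take n u)))) = take n (f (g (take n u)))"
    using f unfolding PP_def by metis
  finally show "take n ((f \<circ> g) u) = take n ((f \<circ> g) (take n u))" by simp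
qed

lemma PP_S:
  assumes "\<And>q \<sigma>. out q \<sigma> \<noteq> []"
  shows "h \<in> automaton_semigroup tr out \<Longrightarrow> PP h"
  unfolding automaton_semigroup_def
proof (induction rule: gen_semigroup.induct)
  case (gen f) then show ?case using PP_state[OF assms] by auto
next
  case (comp f g) then show ?case using PP_comp by blast
qed

lemma comp_closed: "f \<in> automaton_semigroup tr out \<Longrightarrow> g \<in> automaton_semigroup tr out
   \<Longrightarrow> f \<circ> g \<in> automaton_semigroup tr out"
  unfolding automaton_semigroup_def by (rule gen_semigroup.comp)

definition phi :: "nat \<Rightarrow> ('a list \<Rightarrow> 'a list) \<Rightarrow> ('a list \<Rightarrow> 'a list)" where
  "phi n f = (\<lambda>u. take n (f (take n u)))"

lemma phi_finite: "finite (range (phi n :: ('a::finite list \<Rightarrow> 'a list) \<Rightarrow> _))"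
proof -
  define L where "L = {xs :: 'a list. set xs \<subseteq> UNIV \<and> length xs \<le> n}"
  have fL: "finite L" unfolding L_def by (rule finite_lists_length_le) simp
  define H where "H = {h :: 'a list \<Rightarrow> 'a list. (\<forall>u. h u = h (take n u) \<and> h u \<in> L)}"
  have sub: "range (phi n) \<subseteq> H"
    unfolding H_def L_def phi_def by auto
  have inj: "inj_on (\<lambda>h. restrict h L) H"
  proof (rule inj_onI)
    fix h1 h2 assume h1: "h1 \<in> H" and h2: "h2 \<in> H" and e: "restrict h1 L = restrict h2 L"
    show "h1 = h2"
    proof
      fix u
      have tL: "take n u \<in> L" unfolding L_def by simp
      have "h1 (take n u) = h2 (take n u)" using e tL by (metis restrict_apply')
      moreover have "h1 u = h1 (take n u)" "h2 u = h2 (take n u)" using h1 h2 unfolding H_def by blast+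
      ultimately show "h1 u = h2 u" by simp
    qed
  qed
  have "(\<lambda>h. restrict h L) ` H \<subseteq> PiE L (\<lambda>_. L)"
    unfolding H_def by auto
  then have "finite ((\<lambda>h. restrict h L) ` H)"
    using finite_PiE[OF fL, of "\<lambda>_. L"] fL finite_subset by blast
  then have "finite H" using inj finite_imageD by blast
  then show ?thesis using sub finite_subset by blast
qed

theorem mainTheorem8:
  fixes tr :: "'q::finite \<Rightarrow> 'a::finite \<Rightarrow> 'q"
    and out :: "'q \<Rightarrow> 'a \<Rightarrow> 'a list"
  assumes expanding: "\<And>q \<sigma>. out q \<sigma> \<noteq> []"
  shows "residually_finite (automaton_semigroup tr out) (\<circ>)"
  unfolding residually_finite_def
proof (intro ballI impI)
  let ?S = "automaton_semigroup tr out"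
  fix x y assume x: "x \<in> ?S" and y: "y \<in> ?S" and ne: "x \<noteq> y"
  then obtain w where w: "x w \<noteq> y w" by blast
  define n where "n = max (length w) (max (length (x w)) (length (y w)))"
  define R where "R = {(f, g). f \<in> ?S \<and> g \<in> ?S \<and> phi n f = phi n g}"
  have eq: "equiv ?S R"
    unfolding R_def by (rule equivI) (auto simp: refl_on_def sym_def trans_def)
  have PPs: "\<And>h. h \<in> ?S \<Longrightarrow> PP h" using PP_S[where out=out and tr=tr, OF expanding] by blast
  have cong: "(a \<circ> c, b \<circ> c) \<in> R \<and> (c \<circ> a, c \<circ> b) \<in> R"
    if ab: "(a, b) \<in> R" and c: "c \<in> ?S" for a b c
  proof -
    have a: "a \<in> ?S" and b: "b \<in> ?S" and e: "phi n a = phi n b" using ab unfolding R_def by auto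
    have ea: "\<And>v. take n (a (take n v)) = take n (b (take n v))"
      using fun_cong[OF e] unfolding phi_def by simp
    have ea2: "\<And>v. take n (a v) = take n (b v)"
    proof -
      fix v
      have "take n (a v) = take n (a (take n v))" using PPs[OF a] unfolding PP_def by blast
      also have "\<dots> = take n (b (take n v))" by (rule ea)
      also have "\<dots> = take n (b v)" using PPs[OF b] unfolding PP_def by simp
      finally show "take n (a v) = take n (b v)" .
    qed
    have "phi n (a \<circ> c) = phi n (b \<circ> c)"
      unfolding phi_def using ea2 by simp
    moreover have "phi n (c \<circ> a) = phi n (c \<circ> b)"
    proof -
      have "\<And>v. take n (c (a v)) = take n (c (b v))"
      proof -
        fix v
        have "take n (c (a v)) = take n (c (take n (a v)))" using PPs[OF c] unfolding PP_def by blast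
        also have "\<dots> = take n (c (take n (b v)))" by (simp add: ea2)
        also have "\<dots> = take n (c (b v))" using PPs[OF c] unfolding PP_def by simp
        finally show "take n (c (a v)) = take n (c (b v))" .
      qed
      then show ?thesis unfolding phi_def by simp
    qed
    moreover have "a \<circ> c \<in> ?S" "b \<circ> c \<in> ?S" "c \<circ> a \<in> ?S" "c \<circ> b \<in> ?S"
      using a b c comp_closed by blast+
    ultimately show ?thesis unfolding R_def by simp
  qed
  have fin: "finite (?S // R)"
  proof -
    have "?S // R \<subseteq> (\<lambda>h. {g \<in> ?S. phi n g = h}) ` range (phi n)"
    proof
      fix C assume "C \<in> ?S // R"
      then obtain f where f: "f \<in> ?S" and C: "C = R `` {f}" unfolding quotient_def by blast
      have "C = {g \<in> ?S. phi n g = phi n f}" unfolding C R_def using f by auto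
      then show "C \<in> (\<lambda>h. {g \<in> ?S. phi n g = h}) ` range (phi n)" by blast
    qed
    then show ?thesis using phi_finite finite_subset by blast
  qed
  have "phi n x w \<noteq> phi n y w" unfolding phi_def n_def using w by simp
  then have "(x, y) \<notin> R" unfolding R_def by auto
  then show "\<exists>R. equiv ?S R \<and> (\<forall>a b c. (a, b) \<in> R \<and> c \<in> ?S \<longrightarrow>
                   (a \<circ> c, b \<circ> c) \<in> R \<and> (c \<circ> a, c \<circ> b) \<in> R) \<and> finite (?S // R) \<and> (x, y) \<notin> R"
    using eq cong fin by blast
qed

end
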